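(* Let $a,b\in\mathbb{Q}_3$ with $\gamma(a)=m\ge4$, $\gamma(b)=0$ and $(b_0,b_1)=(1,0)$ or $(2,2)$. Then $x=\sum_{k\ge0}x_k3^k\in\mathbb{Z}_3^*$ is a solution of $x^3+ax=b$ if and only if the congruences $$x_0^3\equiv b_0\pmod3,\qquad x_0^3\equiv b_0+3b_1\pmod9,$$ $$x_0^2x_1+M_1(x_0)\equiv b_2\pmod3,$$ $$x_0^2x_2+P_3^2(x_0,x_1)+x_0x_1^2+M_2(x_0,x_1)\equiv b_3\pmod3,$$ $$x_0^2x_{k-1}+P_k^{k-1}(x_0,\dots,x_{k-2})+2x_0x_1x_{k-2}\equiv b_k\pmod3,\quad 4\le k\le m-1,$$ $$x_0^2x_{m-1}+P_m^{m-1}(x_0,\dots,x_{m-2})+2x_0x_1x_{m-2}+x_0a_0\equiv b_m\pmod3,$$ $$x_0^2x_{k-1}+P_k^{k-1}(x_0,\dots,x_{k-2})+2x_0x_1x_{k-2}+x_{k-m}a_0+\dots+x_0a_{k-m}\equiv b_k\pmod3,\quad k\ge m+1,$$ are fulfilled, where the integers $M_k(x_0,\dots,x_{k-1})$ are defined by $$x_0^3=b_0+3b_1+9M_1(x_0),$$ $$x_0^2x_1=b_2-M_1(x_0)+3M_2(x_0,x_1),$$ $$x_0^2x_2+P_3^2(x_0,x_1)+x_0x_1^2=b_3-M_2(x_0,x_1)+3M_3(x_0,x_1,x_2),$$ $$x_0^2x_{k-1}+P_k^{k-1}(x_0,\dots,x_{k-2})+2x_0x_1x_{k-2}=b_k-M_{k-1}(x_0,\dots,x_{k-2})+3M_k(x_0,\dots,x_{k-1}),\quad4\le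 k\le m-1,$$ $$x_0^2x_{m-1}+P_m^{m-1}(x_0,\dots,x_{m-2})+2x_0x_1x_{m-2}+x_0a_0=b_m-M_{m-1}(x_0,\dots,x_{m-2})+3M_m(x_0,\dots,x_{m-1}),$$ $$x_0^2x_{k-1}+P_k^{k-1}(x_0,\dots,x_{k-2})+2x_0x_1x_{k-2}+x_{k-m}a_0+\dots+x_0a_{k-m}=b_k-M_{k-1}(x_0,\dots,x_{k-2})+3M_k(x_0,\dots,x_{k-1}),\quad k\ge m+1.$$
   Context: Write $a=3^{\gamma(a)}(a_0+a_13+a_23^2+\dots)$, $b=3^{\gamma(b)}(b_0+b_13+b_23^2+\dots)$ in canonical form, with digits $a_j,b_j\in\{0,1,2\}$, $a_0,b_0\ne0$, $\gamma(a),\gamma(b)\in\mathbb{Z}$. $\mathbb{Z}_3^*$ is the set of $3$-adic units; $x\in\mathbb{Z}_3^*$ is written $x=x_0+x_13+x_23^2+\dots$ with $x_j\in\{0,1,2\}$, $x_0\ne0$. For $j\le k$, $P_k^j(x_0,\dots,x_{j-1})=\sum\frac{6}{m_0!\cdots m_{j-1}!}x_0^{m_0}\cdots x_{j-1}^{m_{j-1}}$, the sum over nonnegative integers $m_0,\dots,m_{j-1}$ with $\sum_{i=0}^{j-1}m_i=3$ and $\sum_{i=1}^{j-1}im_i=k$. *)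

theory Defs
  imports Main "HOL-Number_Theory.Cong"
begin

text \<open>3-adic integers are represented by their canonical digit sequences
  \<open>d :: nat \<Rightarrow> int\<close> with digits in {0,1,2}; the element is \<open>\<Sum>j. d j * 3^j\<close>.
  Its image in Z/3^N is the truncation \<open>\<Sum>j<N. d j * 3^j\<close>.\<close>

definition digits3 :: "(nat \<Rightarrow> int) \<Rightarrow> bool" where
  "digits3 d \<longleftrightarrow> (\<forall>j. d j \<in> {0, 1, 2})"

definition trunc3 :: "(nat \<Rightarrow> int) \<Rightarrow> nat \<Rightarrow> int" where
  "trunc3 d N = (\<Sum>j<N. d j * 3 ^ j)"

text \<open>Equality \<open>x^3 + a x = b\<close> in Z_3 = lim Z/3^N, where
  \<open>a = 3^m (a_0 + a_1 3 + ...)\<close>, \<open>b = b_0 + b_1 3 + ...\<close>, \<open>x = x_0 + x_1 3 + ...\<close>: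
  the equation holds modulo every power of 3.\<close>
definition cubic_sol3 :: "nat \<Rightarrow> (nat \<Rightarrow> int) \<Rightarrow> (nat \<Rightarrow> int) \<Rightarrow> (nat \<Rightarrow> int) \<Rightarrow> bool" where
  "cubic_sol3 m a b x \<longleftrightarrow>
     (\<forall>N. [trunc3 x N ^ 3 + 3 ^ m * trunc3 a N * trunc3 x N = trunc3 b N] (mod 3 ^ N))"

text \<open>\<open>P_k^j(x_0,...,x_{j-1})\<close>: sum over \<open>m_0,...,m_{j-1}\<close> with \<open>\<Sum> m_i = 3\<close>,
  \<open>\<Sum> i m_i = k\<close> of \<open>6/(m_0!...m_{j-1}!) x_0^{m_0} ... x_{j-1}^{m_{j-1}}\<close>
  (the coefficient is an integer, a multinomial coefficient).\<close>
definition Pkj :: "nat \<Rightarrow> nat \<Rightarrow> (nat \<Rightarrow> int) \<Rightarrow> int" where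
  "Pkj k j x = (\<Sum>ms \<in> {ms :: nat \<Rightarrow> nat. (\<forall>i\<ge>j. ms i = 0) \<and> (\<Sum>i<j. ms i) = 3
                                  \<and> (\<Sum>i<j. i * ms i) = k}.
      (6 div (\<Prod>i<j. int (fact (ms i)))) * (\<Prod>i<j. x i ^ ms i))"

definition Lk :: "nat \<Rightarrow> (nat \<Rightarrow> int) \<Rightarrow> (nat \<Rightarrow> int) \<Rightarrow> nat \<Rightarrow> int" where
  "Lk m a x k =
    (if k = 2 then x 0 ^ 2 * x 1
     else if k = 3 then x 0 ^ 2 * x 2 + Pkj 3 2 x + x 0 * x 1 ^ 2
     else x 0 ^ 2 * x (k - 1) + Pkj k (k - 1) x + 2 * x 0 * x 1 * x (k - 2)
          + (if m \<le> k then (\<Sum>i\<le>k - m. x (k - m - i) * a i) else 0))"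

text \<open>The integers \<open>M_k(x_0,...,x_{k-1})\<close>: \<open>x_0^3 = b_0 + 3 b_1 + 9 M_1\<close> and
  \<open>L_k = b_k - M_{k-1} + 3 M_k\<close> for \<open>k \<ge> 2\<close> (divisions are exact whenever the
  preceding congruences hold).\<close>
fun Mk :: "nat \<Rightarrow> (nat \<Rightarrow> int) \<Rightarrow> (nat \<Rightarrow> int) \<Rightarrow> (nat \<Rightarrow> int) \<Rightarrow> nat \<Rightarrow> int" where
  "Mk m a b x 0 = 0"
| "Mk m a b x (Suc 0) = (x 0 ^ 3 - b 0 - 3 * b 1) div 9"
| "Mk m a b x (Suc (Suc n)) =
     (Lk m a x (Suc (Suc n)) - b (Suc (Suc n)) + Mk m a b x (Suc n)) div 3"

end

theory Submission
  imports Defs "HOL-Computational_Algebra.Polynomial"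
begin


definition AS :: "nat \<Rightarrow> nat \<Rightarrow> (nat \<Rightarrow> nat) set" where
  "AS s j = {ms. (\<forall>i\<ge>j. ms i = 0) \<and> (\<Sum>i<j. ms i) = s}"
definition lvl :: "nat \<Rightarrow> (nat \<Rightarrow> nat) \<Rightarrow> nat" where
  "lvl j ms = (\<Sum>i<j. i * ms i)"
definition cf :: "nat \<Rightarrow> nat \<Rightarrow> (nat \<Rightarrow> nat) \<Rightarrow> int" where
  "cf j s ms = int (fact s) div (\<Prod>i<j. int (fact (ms i)))"
definition mon :: "nat \<Rightarrow> (nat \<Rightarrow> int) \<Rightarrow> (nat \<Rightarrow> nat) \<Rightarrow> int" where
  "mon j y ms = (\<Prod>i<j. y i ^ ms i)"
definition G :: "nat \<Rightarrow> nat \<Rightarrow> nat \<Rightarrow> (nat \<Rightarrow> int) \<Rightarrow> int" where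
  "G s k j y = (\<Sum>ms\<in>AS s j. if lvl j ms = k then cf j s ms * mon j y ms else 0)"

lemma AS_0: "AS s 0 = (if s = 0 then {\<lambda>_. 0} else {})"
  by (auto simp: AS_def fun_eq_iff)

lemma upd_sum: "(\<Sum>i<(j::nat). f ((ms(j:=t)) i)) = (\<Sum>i<j. f (ms i))"
  by (rule sum.cong) auto
lemma upd_prod: "(\<Prod>i<(j::nat). f i ((ms(j:=t)) i)) = (\<Prod>i<j. f i (ms i))"
  by (rule prod.cong) auto

lemma AS_Suc: "AS s (Suc j) = (\<lambda>(t,ms). ms(j:=t)) ` (SIGMA t:{..s}. AS (s-t) j)"
proof (rule set_eqI, rule iffI)
  fix ms' assume h: "ms' \<in> AS s (Suc j)"
  define t where "t = ms' j"
  define ms where "ms = ms'(j:=0)"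
  have s: "(\<Sum>i<j. ms' i) + ms' j = s" using h by (simp add: AS_def)
  have "(\<Sum>i<j. ms i) = (\<Sum>i<j. ms' i)" unfolding ms_def using upd_sum[of "\<lambda>x. x" ms' 0 j] by simp
  hence "ms \<in> AS (s-t) j" using h s by (auto simp: AS_def ms_def t_def)
  moreover have "t \<le> s" using s t_def by simp
  moreover have "ms' = ms(j:=t)" by (auto simp: ms_def t_def)
  ultimately show "ms' \<in> (\<lambda>(t,ms). ms(j:=t)) ` (SIGMA t:{..s}. AS (s-t) j)" by force
next
  fix ms' assume "ms' \<in> (\<lambda>(t,ms). ms(j:=t)) ` (SIGMA t:{..s}. AS (s-t) j)"
  then obtain t ms where t: "t \<le> s" and ms: "ms \<in> AS (s-t) j" and e: "ms' = ms(j:=t)" by auto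
  have "(\<Sum>i<j. ms' i) = (\<Sum>i<j. ms i)" unfolding e using upd_sum[of "\<lambda>x. x" ms t j] by simp
  thus "ms' \<in> AS s (Suc j)" using t ms e by (auto simp: AS_def)
qed

lemma AS_inj: "inj_on (\<lambda>(t,ms). ms(j:=t)) (SIGMA t:{..s}. AS (s-t) j)"
proof (rule inj_onI, clarsimp)
  fix t1 ms1 t2 ms2 assume "ms1 \<in> AS (s-t1) j" "ms2 \<in> AS (s-t2) j" "ms1(j := t1) = ms2(j := t2)"
  note h = this
  have "t1 = t2" using fun_cong[OF h(3), of j] by simp
  moreover have "ms1 = ms2"
  proof
    fix x show "ms1 x = ms2 x"
    proof (cases "x = j")
      case True thus ?thesis using h(1,2) by (simp add: AS_def)
    next
      case False thus ?thesis using fun_cong[OF h(3), of x] by simp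
    qed
  qed
  ultimately show "t1 = t2 \<and> ms1 = ms2" by simp
qed

lemma finite_AS: "finite (AS s j)"
proof (induction j arbitrary: s)
  case 0 thus ?case by (simp add: AS_0)
next
  case (Suc j) thus ?case by (simp add: AS_Suc)
qed

lemma prod_fact_dvd: "(\<Prod>i<(j::nat). fact (ms i) :: nat) dvd fact (\<Sum>i<j. ms i)"
proof (induction j)
  case 0 thus ?case by simp
next
  case (Suc j)
  have "(\<Prod>i<Suc j. fact (ms i) :: nat) = (\<Prod>i<j. fact (ms i)) * fact (ms j)" by simp
  also have "\<dots> dvd fact (\<Sum>i<j. ms i) * fact (ms j)" using Suc by simp
  also have "\<dots> dvd fact ((\<Sum>i<j. ms i) + ms j)" by (rule fact_fact_dvd_fact)
  finally show ?case by simp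
qed

lemma cf_upd:
  assumes "t \<le> s" "ms \<in> AS (s-t) j"
  shows "cf (Suc j) s (ms(j:=t)) = of_nat (s choose t) * cf j (s-t) ms"
proof -
  define P where "P = (\<Prod>i<j. int (fact (ms i)))"
  have "(\<Prod>i<j. fact (ms i) :: nat) dvd fact (s - t)" using prod_fact_dvd[where j=j and ms=ms] assms by (simp add: AS_def)
  hence "P dvd int (fact (s-t))" unfolding P_def by (metis of_nat_dvd_iff of_nat_prod)
  then obtain q where q: "int (fact (s-t)) = P * q" by blast
  have P0: "P \<noteq> 0" unfolding P_def by simp
  have fs: "int (fact s) = int (fact t) * int (fact (s-t)) * int (s choose t)"
    using binomial_fact_lemma[OF assms(1)] by (metis of_nat_mult)
  have pr: "(\<Prod>i<Suc j. int (fact ((ms(j:=t)) i))) = P * int (fact t)"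
    unfolding P_def using upd_prod[of "\<lambda>i x. int (fact x)" ms t j] by simp
  have "cf (Suc j) s (ms(j:=t)) = (P * int (fact t) * (int (s choose t) * q)) div (P * int (fact t))"
    unfolding cf_def pr fs q by (simp add: ac_simps)
  also have "\<dots> = int (s choose t) * q" using P0 by simp
  also have "cf j (s-t) ms = q" unfolding cf_def q P_def[symmetric] using P0 by simp
  ultimately show ?thesis by simp
qed

lemma lvl_upd: "lvl (Suc j) (ms(j:=t)) = lvl j ms + j * t"
  unfolding lvl_def by (simp add: upd_sum)

lemma mon_upd: "mon (Suc j) y (ms(j:=t)) = mon j y ms * y j ^ t"
  unfolding mon_def using upd_prod[of "\<lambda>i x. y i ^ x" ms t j] by simp

lemma G_0: "G s k 0 y = (if s = 0 \<and> k = 0 then 1 else 0)"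
  by (simp add: G_def AS_0 lvl_def cf_def mon_def)

lemma G_Suc: "G s k (Suc j) y =
  (\<Sum>t\<le>s. if j * t \<le> k then of_nat (s choose t) * y j ^ t * G (s-t) (k - j*t) j y else 0)"
proof -
  let ?h = "\<lambda>(t,ms). ms(j:=t)"
  let ?F = "\<lambda>ms. if lvl (Suc j) ms = k then cf (Suc j) s ms * mon (Suc j) y ms else 0"
  have "G s k (Suc j) y = sum ?F (?h ` (SIGMA t:{..s}. AS (s-t) j))"
    unfolding G_def AS_Suc ..
  also have "\<dots> = sum (?F \<circ> ?h) (SIGMA t:{..s}. AS (s-t) j)"
    by (rule sum.reindex[OF AS_inj])
  also have "\<dots> = (\<Sum>t\<le>s. \<Sum>ms\<in>AS (s-t) j. ?F (ms(j:=t)))"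
    by (subst sum.Sigma) (auto simp: finite_AS intro!: sum.cong split: prod.splits)
  also have "\<dots> = (\<Sum>t\<le>s. if j * t \<le> k then of_nat (s choose t) * y j ^ t * G (s-t) (k - j*t) j y else 0)"
  proof (rule sum.cong[OF refl])
    fix t assume t: "t \<in> {..s}"
    have e: "?F (ms(j:=t)) = (if lvl j ms + j * t = k then of_nat (s choose t) * y j ^ t * (cf j (s-t) ms * mon j y ms) else 0)"
      if "ms \<in> AS (s-t) j" for ms
      using cf_upd[of t s ms j] that t by (simp add: lvl_upd mon_upd)
    show "(\<Sum>ms\<in>AS (s-t) j. ?F (ms(j:=t))) = (if j * t \<le> k then of_nat (s choose t) * y j ^ t * G (s-t) (k - j*t) j y else 0)"
    proof (cases "j * t \<le> k")
      case True
      have "(\<Sum>ms\<in>AS (s-t) j. ?F (ms(j:=t))) = (\<Sum>ms\<in>AS (s-t) j. of_nat (s choose t) * y j ^ t * (if lvl j ms = k - j * t then cf j (s-t) ms * mon j y ms else 0))"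
        by (rule sum.cong[OF refl]) (use True in \<open>auto simp: e\<close>)
      thus ?thesis using True by (simp add: G_def sum_distrib_left)
    next
      case False
      thus ?thesis by (simp add: e)
    qed
  qed
  finally show ?thesis .
qed

definition Pj :: "(nat \<Rightarrow> int) \<Rightarrow> nat \<Rightarrow> int poly" where
  "Pj y j = (\<Sum>i<j. monom (y i) i)"

lemma coeff_Pj: "coeff (Pj y j) i = (if i < j then y i else 0)"
  by (simp add: Pj_def coeff_sum)

lemma coeff_Pj_pow: "coeff (Pj y j ^ s) k = G s k j y"
proof (induction j arbitrary: s k)
  case 0 thus ?case by (cases s) (auto simp: Pj_def G_0)
next
  case (Suc j)
  have "Pj y (Suc j) = monom (y j) j + Pj y j" by (simp add: Pj_def)
  hence "coeff (Pj y (Suc j) ^ s) k = (\<Sum>t\<le>s. coeff (of_nat (s choose t) * monom (y j ^ t) (j*t) * Pj y j ^ (s-t)) k)"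
    by (simp add: binomial_ring coeff_sum monom_power mult.commute)
  also have "\<dots> = G s k (Suc j) y"
    unfolding G_Suc
    by (rule sum.cong[OF refl]) (simp add: of_nat_poly coeff_monom_mult Suc.IH mult.assoc[symmetric] monom_0[symmetric] mult_monom flip: mult.assoc)
  finally show ?case .
qed

lemma G_stable: "k < j \<Longrightarrow> G s k (Suc j) y = G s k j y"
  unfolding G_Suc sum.atMost_shift by (simp add: G_Suc)

lemma G_stable_ge: "k < j \<Longrightarrow> G s k j y = G s k (Suc k) y"
proof -
  have "G s k (Suc k + d) y = G s k (Suc k) y" for d
    by (induction d) (auto simp: G_stable)
  moreover assume "k < j"
  ultimately show ?thesis by (metis Suc_leI le_add_diff_inverse)
qed

lemma G_s0: "0 < j \<Longrightarrow> G s 0 j y = y 0 ^ s"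
proof -
  have 1: "G s 0 1 y = y 0 ^ s"
  proof -
    have "G s 0 1 y = (\<Sum>t\<le>s. if t = s then y 0 ^ t else 0)"
      unfolding One_nat_def G_Suc by (rule sum.cong) (auto simp: G_0)
    thus ?thesis by simp
  qed
  assume "0 < j" thus ?thesis using G_stable_ge[of 0 j s y] 1 by simp
qed

lemma G_0k: "G 0 k j y = (if k = 0 then 1 else 0)"
  by (induction j) (auto simp: G_0 G_Suc)

lemma G_1k: "G 1 k j y = (if k < j then y k else 0)"
  by (induction j) (auto simp: G_0 G_Suc G_0k less_Suc_eq)

lemma G_21: "2 \<le> j \<Longrightarrow> G 2 1 j y = 2 * y 0 * y 1"
proof -
  have "G 2 1 2 y = 2 * y 0 * y 1"
    by (simp add: numeral_2_eq_2 G_Suc G_0 G_1k G_0k)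
  moreover assume "2 \<le> j"
  ultimately show ?thesis using G_stable_ge[of 1 j 2 y] by (cases "j = 2") (auto simp: numeral_2_eq_2)
qed

lemma Pkj_G: "Pkj k j y = G 3 k j y"
proof -
  have "G 3 k j y = (\<Sum>ms\<in>{ms \<in> AS 3 j. lvl j ms = k}. cf j 3 ms * mon j y ms)"
    unfolding G_def by (rule sum.inter_filter[symmetric, OF finite_AS])
  also have "{ms \<in> AS 3 j. lvl j ms = k} = {ms :: nat \<Rightarrow> nat. (\<forall>i\<ge>j. ms i = 0) \<and> (\<Sum>i<j. ms i) = 3
                                  \<and> (\<Sum>i<j. i * ms i) = k}"
    by (auto simp: AS_def lvl_def)
  finally show ?thesis by (simp add: Pkj_def cf_def mon_def fact_numeral)
qed

lemma G30: "G 3 0 1 y = y 0 ^ 3" by (simp add: G_s0)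

lemma G31: "G 3 1 2 y = 3 * y 0 ^ 2 * y 1"
  by (simp add: numeral_2_eq_2 G_Suc G_0 numeral_3_eq_3 G_s0)

lemma G32: "G 3 2 3 y = 3 * y 0 ^ 2 * y 2 + 3 * y 0 * y 1 ^ 2"
  by (simp add: numeral_2_eq_2 G_Suc G_0 numeral_3_eq_3 G_s0 G_1k G_0k algebra_simps power2_eq_square)

lemma G3_step: assumes "3 \<le> k"
  shows "G 3 k (Suc k) y = G 3 k (k - 1) y + 6 * y 0 * y 1 * y (k - 1) + 3 * y 0 ^ 2 * y k"
proof -
  obtain j where k: "k = Suc j" and j: "2 \<le> j" using assms by (cases k) auto
  have a: "G 3 (Suc j) (Suc (Suc j)) y = G 3 (Suc j) (Suc j) y + 3 * y (Suc j) * G 2 0 (Suc j) y"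
    by (subst G_Suc) (simp add: numeral_3_eq_3 numeral_2_eq_2)
  have b: "G 3 (Suc j) (Suc j) y = G 3 (Suc j) j y + 3 * y j * G 2 1 j y"
    using j by (subst G_Suc) (simp add: numeral_3_eq_3 numeral_2_eq_2)
  have c: "G 2 (Suc 0) j y = 2 * y 0 * y 1" using G_21[OF j] by simp
  show ?thesis using a b j c unfolding k by (simp add: G_s0)
qed



lemma carry_eq:
  fixes e M :: "nat \<Rightarrow> int"
  assumes M1: "M 1 = (e 0 + 3 * e 1) div 9"
    and MS: "\<And>n. M (Suc (Suc n)) = (e (Suc (Suc n)) + M (Suc n)) div 3"
    and h9: "9 dvd e 0 + 3 * e 1"
  shows "(\<forall>k. 2 \<le> k \<and> k < d + 2 \<longrightarrow> 3 dvd e k + M (k - 1)) \<Longrightarrow>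
         (\<Sum>k<d+2. e k * 3 ^ k) = 3 ^ (d+2) * M (d+1)"
proof (induction d)
  case 0
  have "(\<Sum>k<0+2. e k * 3 ^ k) = e 0 + 3 * e 1" by (simp add: numeral_2_eq_2)
  also have "\<dots> = 9 * M 1" using M1 h9 by simp
  finally show ?case by simp
next
  case (Suc d)
  have IH: "(\<Sum>k<d+2. e k * 3 ^ k) = 3 ^ (d+2) * M (d+1)" using Suc by auto
  have dv: "3 dvd e (d+2) + M (d+1)" using Suc.prems[rule_format, of "d+2"] by simp
  have "(\<Sum>k<Suc d+2. e k * 3 ^ k) = 3 ^ (d+2) * (e (d+2) + M (d+1))"
    using IH by (simp add: algebra_simps)
  also have "e (d+2) + M (d+1) = 3 * M (d+2)"
    using MS[of d] dv by (simp add: numeral_2_eq_2)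
  finally show ?case by simp
qed

lemma carry:
  fixes e M :: "nat \<Rightarrow> int"
  assumes M1: "M 1 = (e 0 + 3 * e 1) div 9"
    and MS: "\<And>n. M (Suc (Suc n)) = (e (Suc (Suc n)) + M (Suc n)) div 3"
  shows "(\<forall>N. (3::int) ^ N dvd (\<Sum>k<N. e k * 3 ^ k)) \<longleftrightarrow>
         (3 dvd e 0 \<and> 9 dvd e 0 + 3 * e 1 \<and> (\<forall>k\<ge>2. 3 dvd e k + M (k - 1)))"
proof
  assume H: "\<forall>N. (3::int) ^ N dvd (\<Sum>k<N. e k * 3 ^ k)"
  have 3: "3 dvd e 0" using H[rule_format, of 1] by simp
  have 9: "9 dvd e 0 + 3 * e 1" using H[rule_format, of 2] by (simp add: numeral_2_eq_2 algebra_simps)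
  have "2 \<le> k \<longrightarrow> 3 dvd e k + M (k - 1)" for k
  proof (induction k rule: less_induct)
    case (less k)
    show ?case
    proof
      assume k: "2 \<le> k"
      then obtain d where d: "k = d + 2" by (metis add.commute le_Suc_ex)
      have S: "(\<Sum>k<d+2. e k * 3 ^ k) = 3 ^ (d+2) * M (d+1)"
        by (rule carry_eq[OF M1 MS 9]) (use less d in auto)
      have "(3::int) ^ (Suc k) dvd (\<Sum>k<Suc k. e k * 3 ^ k)" using H by blast
      also have "(\<Sum>k<Suc k. e k * 3 ^ k) = 3 ^ k * (e k + M (k - 1))"
        using S d by (simp add: algebra_simps)
      finally have "3 ^ k * 3 dvd 3 ^ k * (e k + M (k - 1))" by (simp add: mult.commute)
      thus "3 dvd e k + M (k - 1)" by (subst (asm) dvd_mult_cancel_left) auto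
    qed
  qed
  thus "3 dvd e 0 \<and> 9 dvd e 0 + 3 * e 1 \<and> (\<forall>k\<ge>2. 3 dvd e k + M (k - 1))" using 3 9 by auto
next
  assume H: "3 dvd e 0 \<and> 9 dvd e 0 + 3 * e 1 \<and> (\<forall>k\<ge>2. 3 dvd e k + M (k - 1))"
  show "\<forall>N. (3::int) ^ N dvd (\<Sum>k<N. e k * 3 ^ k)"
  proof
    fix N
    show "(3::int) ^ N dvd (\<Sum>k<N. e k * 3 ^ k)"
    proof (cases "N \<ge> 2")
      case True
      then obtain d where d: "N = d + 2" by (metis add.commute le_Suc_ex)
      have "(\<Sum>k<d+2. e k * 3 ^ k) = 3 ^ (d+2) * M (d+1)"
        by (rule carry_eq[OF M1 MS]) (use H in auto)
      thus ?thesis using d by simp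
    next
      case False
      hence "N = 0 \<or> N = 1" by auto
      thus ?thesis using H by auto
    qed
  qed
qed



lemma poly_mod: "(3::int) ^ N dvd poly p 3 - (\<Sum>k<N. coeff p k * 3 ^ k)"
proof -
  define K where "K = max N (Suc (degree p))"
  have "poly p 3 = (\<Sum>i<K. coeff p i * 3 ^ i)"
    unfolding poly_altdef
    by (rule sum.mono_neutral_left) (auto simp: K_def coeff_eq_0)
  also have "{..<K} = {..<N} \<union> {N..<K}" by (auto simp: K_def)
  also have "sum (\<lambda>i. coeff p i * 3 ^ i) ({..<N} \<union> {N..<K}) =
     (\<Sum>i<N. coeff p i * 3 ^ i) + (\<Sum>i\<in>{N..<K}. coeff p i * 3 ^ i)"
    by (rule sum.union_disjoint) auto
  finally have e: "poly p 3 - (\<Sum>k<N. coeff p k * 3 ^ k) = (\<Sum>i\<in>{N..<K}. coeff p i * 3 ^ i)" by simp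
  show ?thesis unfolding e
    by (rule dvd_sum) (auto intro!: dvd_mult le_imp_power_dvd)
qed

lemma poly_Pj: "poly (Pj y N) 3 = trunc3 y N"
  by (simp add: Pj_def trunc3_def poly_sum poly_monom)

definition Aa :: "nat \<Rightarrow> (nat \<Rightarrow> int) \<Rightarrow> (nat \<Rightarrow> int) \<Rightarrow> nat \<Rightarrow> int" where
  "Aa m a x k = (if m \<le> k then (\<Sum>i\<le>k - m. x (k - m - i) * a i) else 0)"

definition rr :: "(nat \<Rightarrow> int) \<Rightarrow> nat \<Rightarrow> int" where
  "rr x N = (if N = 2 then x 0 ^ 2 * x 1 else if N = 3 then x 0 ^ 2 * x 2 + x 0 * x 1 ^ 2
            else if N \<ge> 4 then x 0 ^ 2 * x (N - 1) + 2 * x 0 * x 1 * x (N - 2) else 0)"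

definition dd :: "nat \<Rightarrow> (nat \<Rightarrow> int) \<Rightarrow> (nat \<Rightarrow> int) \<Rightarrow> nat \<Rightarrow> int" where
  "dd m a x k = G 3 k (Suc k) x - (if k = 0 then x 0 ^ 3 else if k = 1 then 0 else Lk m a x k - Aa m a x k)"

lemma dd_step: assumes "4 \<le> m" shows "rr x N + dd m a x N = 3 * rr x (Suc N)"
proof -
  consider "N = 0" | "N = 1" | "N = 2" | "N = 3" | "N \<ge> 4" by linarith
  thus ?thesis
  proof cases
    case 1 thus ?thesis using G30[of x] by (simp add: rr_def dd_def)
  next
    case 2 thus ?thesis using G31[of x] by (simp add: rr_def dd_def numeral_2_eq_2)
  next
    case 3
    have "G 3 2 (Suc 2) x = 3 * x 0 ^ 2 * x 2 + 3 * x 0 * x 1 ^ 2" using G32 by (simp add: numeral_3_eq_3)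
    thus ?thesis using 3 assms by (simp add: rr_def dd_def Lk_def Aa_def algebra_simps)
  next
    case 4
    have "G 3 3 (Suc 3) x = G 3 3 2 x + 6 * x 0 * x 1 * x 2 + 3 * x 0 ^ 2 * x 3"
      using G3_step[of 3 x] by simp
    thus ?thesis using 4 assms by (simp add: rr_def dd_def Lk_def Aa_def Pkj_G algebra_simps)
  next
    case 5
    have "G 3 N (Suc N) x = G 3 N (N - 1) x + 6 * x 0 * x 1 * x (N - 1) + 3 * x 0 ^ 2 * x N"
      using G3_step[of N x] 5 by simp
    moreover have "Suc N - 1 = N" "Suc N - 2 = N - 1" using 5 by auto
    ultimately show ?thesis using 5 assms by (simp add: rr_def dd_def Lk_def Aa_def Pkj_G algebra_simps)
  qed
qed

lemma dd_sum: assumes "4 \<le> m" shows "(\<Sum>k<N. dd m a x k * 3 ^ k) = 3 ^ N * rr x N"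
proof (induction N)
  case 0 thus ?case by (simp add: rr_def)
next
  case (Suc N)
  have "(\<Sum>k<Suc N. dd m a x k * 3 ^ k) = 3 ^ N * (rr x N + dd m a x N)" using Suc by (simp add: algebra_simps)
  also have "\<dots> = 3 ^ Suc N * rr x (Suc N)" using dd_step[OF assms] by simp
  finally show ?case .
qed



lemma coeffQ: assumes "k < N"
  shows "coeff (Pj x N ^ 3 + monom 1 m * (Pj a N * Pj x N) - Pj b N) k = G 3 k (Suc k) x + Aa m a x k - b k"
proof -
  have 1: "coeff (Pj x N ^ 3) k = G 3 k (Suc k) x" using assms G_stable_ge[OF assms, of 3 x] by (simp add: coeff_Pj_pow)
  have 2: "coeff (monom 1 m * (Pj a N * Pj x N)) k = Aa m a x k"
  proof (cases "m \<le> k")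
    case True
    have "coeff (monom 1 m * (Pj a N * Pj x N)) k = (\<Sum>i\<le>k - m. coeff (Pj a N) i * coeff (Pj x N) (k - m - i))"
      unfolding coeff_monom_mult using True by (simp add: coeff_mult)
    also have "\<dots> = (\<Sum>i\<le>k - m. x (k - m - i) * a i)"
      by (rule sum.cong) (use assms True in \<open>auto simp: coeff_Pj\<close>)
    finally show ?thesis using True by (simp add: Aa_def)
  next
    case False thus ?thesis by (simp add: coeff_monom_mult Aa_def)
  qed
  show ?thesis using 1 2 assms by (simp add: coeff_Pj)
qed

theorem theorem3p6:
  fixes a b x :: "nat \<Rightarrow> int" and m :: nat
  assumes "digits3 a" and "a 0 \<noteq> 0" and "m \<ge> 4"
    and "digits3 b" and "b 0 \<noteq> 0"
    and "(b 0, b 1) = (1, 0) \<or> (b 0, b 1) = (2, 2)"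
    and "digits3 x" and "x 0 \<noteq> 0"
  shows "cubic_sol3 m a b x \<longleftrightarrow>
    ([x 0 ^ 3 = b 0] (mod 3) \<and> [x 0 ^ 3 = b 0 + 3 * b 1] (mod 9) \<and>
     (\<forall>k\<ge>2. [Lk m a x k + Mk m a b x (k - 1) = b k] (mod 3)))"
proof -
  define e where "e k = (if k = 0 then x 0 ^ 3 - b 0 else if k = 1 then - b 1 else Lk m a x k - b k)" for k
  define Q where "Q N = Pj x N ^ 3 + monom 1 m * (Pj a N * Pj x N) - Pj b N" for N
  have m4: "4 \<le> m" using assms by simp
  have step: "(3::int) ^ N dvd (trunc3 x N ^ 3 + 3 ^ m * trunc3 a N * trunc3 x N - trunc3 b N)
      \<longleftrightarrow> (3::int) ^ N dvd (\<Sum>k<N. e k * 3 ^ k)" for N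
  proof -
    have pq: "poly (Q N) 3 = trunc3 x N ^ 3 + 3 ^ m * trunc3 a N * trunc3 x N - trunc3 b N"
      by (simp add: Q_def poly_Pj poly_monom)
    have ce: "coeff (Q N) k = e k + dd m a x k" if "k < N" for k
      using coeffQ[OF that, of x m a b] m4
      by (auto simp: Q_def e_def dd_def Aa_def)
    have "(\<Sum>k<N. coeff (Q N) k * 3 ^ k) = (\<Sum>k<N. e k * 3 ^ k) + (\<Sum>k<N. dd m a x k * 3 ^ k)"
      by (simp add: ce sum.distrib algebra_simps)
    also have "(\<Sum>k<N. dd m a x k * 3 ^ k) = 3 ^ N * rr x N" by (rule dd_sum[OF m4])
    finally have s: "(\<Sum>k<N. coeff (Q N) k * 3 ^ k) = (\<Sum>k<N. e k * 3 ^ k) + 3 ^ N * rr x N" .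
    have d: "(3::int) ^ N dvd poly (Q N) 3 - ((\<Sum>k<N. e k * 3 ^ k) + 3 ^ N * rr x N)"
      using poly_mod[of N "Q N"] unfolding s .
    have "poly (Q N) 3 - (\<Sum>k<N. e k * 3 ^ k) = (poly (Q N) 3 - ((\<Sum>k<N. e k * 3 ^ k) + 3 ^ N * rr x N)) + 3 ^ N * rr x N"
      by simp
    hence d2: "(3::int) ^ N dvd poly (Q N) 3 - (\<Sum>k<N. e k * 3 ^ k)" using d by (metis dvd_add dvd_triv_left)
    have "(3::int) ^ N dvd poly (Q N) 3 \<longleftrightarrow> (3::int) ^ N dvd (\<Sum>k<N. e k * 3 ^ k)"
    proof
      assume "(3::int) ^ N dvd poly (Q N) 3"
      from dvd_diff[OF this d2] show "(3::int) ^ N dvd (\<Sum>k<N. e k * 3 ^ k)" by simp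
    next
      assume "(3::int) ^ N dvd (\<Sum>k<N. e k * 3 ^ k)"
      from dvd_add[OF this d2] show "(3::int) ^ N dvd poly (Q N) 3" by simp
    qed
    thus ?thesis unfolding pq .
  qed
  have "cubic_sol3 m a b x \<longleftrightarrow> (\<forall>N. (3::int) ^ N dvd (\<Sum>k<N. e k * 3 ^ k))"
    unfolding cubic_sol3_def cong_iff_dvd_diff using step by presburger
  also have "\<dots> \<longleftrightarrow> (3 dvd e 0 \<and> 9 dvd e 0 + 3 * e 1 \<and> (\<forall>k\<ge>2. 3 dvd e k + Mk m a b x (k - 1)))"
    by (rule carry) (simp_all add: e_def)
  also have "\<dots> \<longleftrightarrow> ([x 0 ^ 3 = b 0] (mod 3) \<and> [x 0 ^ 3 = b 0 + 3 * b 1] (mod 9) \<and>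
     (\<forall>k\<ge>2. [Lk m a x k + Mk m a b x (k - 1) = b k] (mod 3)))"
  proof -
    have c1: "[x 0 ^ 3 = b 0] (mod 3) \<longleftrightarrow> 3 dvd e 0" by (simp add: cong_iff_dvd_diff e_def)
    have "e 0 + 3 * e 1 = x 0 ^ 3 - (b 0 + 3 * b 1)" by (simp add: e_def)
    hence c2: "[x 0 ^ 3 = b 0 + 3 * b 1] (mod 9) \<longleftrightarrow> 9 dvd e 0 + 3 * e 1" by (simp add: cong_iff_dvd_diff)
    have "e k + Mk m a b x (k - 1) = Lk m a x k + Mk m a b x (k - 1) - b k" if "k \<ge> 2" for k
      using that by (simp add: e_def diff_add_eq)
    hence c3: "(\<forall>k\<ge>2. 3 dvd e k + Mk m a b x (k - 1)) \<longleftrightarrow> (\<forall>k\<ge>2. [Lk m a x k + Mk m a b x (k - 1) = b k] (mod 3))"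
      by (simp add: cong_iff_dvd_diff diff_add_eq)
    show ?thesis using c1 c2 c3 by blast
  qed
  finally show ?thesis .
qed


end
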